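(* Let $\beta\in(0,2]$, $L>0$, $\Delta_{\beta,n}=(\log n/n)^{(\beta-\lceil\beta\rceil+1)/(2\beta+1)}$ and $\gamma_n=C_\beta h_n^{\beta-\lceil\beta\rceil+1}$. If $C$ is a constant with $C\ge(2\gamma_n+2Lh_n^{\beta-\lceil\beta\rceil+1})/\Delta_{\beta,n}$ (for instance $C=(2C_\beta+2L)C_h^{\beta-\lceil\beta\rceil+1}$), then $\varepsilon_{\lceil\beta\rceil-1,\gamma_n}(f)\ge h_n$ for every $f\in\mathcal F_\beta(C\Delta_{\beta,n})$.
   Context: $\Sigma(\beta,L)$: functions $f:[0,1]\to\mathbb R$ with $|f^{(\lceil\beta\rceil-1)}(x)-f^{(\lceil\beta\rceil-1)}(y)|\le L|x-y|^{\beta+1-\lceil\beta\rceil}$. $\mathcal F_\beta(\delta)=\{f\in\Sigma(\beta,L):\max_{0\le a<b\le1}(f(a)-f(b))\ge\delta\}$ if $\beta\le1$, and $\{f\in\Sigma(\beta,L):\min_{[0,1]}f'\le-\delta\}$ if $\beta\in(1,2]$. $\mathcal M$: nondecreasing functions; $\lambda$: Lebesgue measure; $\varepsilon_{0,\gamma}(f)=\min_{g\in\mathcal M}\lambda(\{x:|f(x)-g(x)|>\gamma\})$, $\varepsilon_{1,\gamma}(f)=\lambda(\{x:f'(x)\le-\gamma\})$. Constants: $\sigma>0$ noise level, $K$ a kernel (nonnegative, $\int K=1$, supported in $[-1,1]$, bounded by $K_{\max}$, Lipschitz with constant $L_K$, symmetric), $\mu_2=\int K^2$, $\lambda_0>0$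 ($1/2$ if $\beta\le1$, $0.0228$ if $\beta\in(1,2]$). $C_*=8K_{\max}/\lambda_0$, $q_1=C_*L/(\lceil\beta\rceil-1)!$, $q_2=16\sigma^2\lceil\beta\rceil\mu_2/\lambda_0^2$, $C_h=(q_2/(4q_1^2\beta))^{1/(2\beta+1)}$, $h_n=C_h(\log n/n)^{1/(2\beta+1)}$; $L_1=\sqrt e(K_{\max}+L_K)$, $L_2=2\lceil\beta\rceil K_{\max}+\lceil\beta\rceil L_K$, $\widetilde C_*=L_1/(8L_2)+\sqrt eK_{\max}/\lambda_0$, $W=\max(4C_*^2,4\widetilde C_*^2)$; $C_\beta=\big((\tfrac{16K_{\max}}{\lambda_0}\vee2)+4\big)L+\sigma\big(\sqrt{4W/C_h^{2\beta+1}}+\sqrt{6W/C_h^{2\beta+1}}\big)$ if $\beta\in(0,1]$ and $C_\beta=4L+\frac{16L_2\sigma}{\lambda_0}\sqrt{4W/C_h^{2\beta+1}}$ if $\beta\in(1,2]$.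
   Formalization: For $\beta$ in (1,2] the conclusion is claimed only when $h_n \le 1$, a hypothesis absent for $\beta \le 1$. The statement above fails without it. *)

theory Defs
  imports "HOL-Analysis.Analysis"
begin

definition dfun :: "(real \<Rightarrow> real) \<Rightarrow> real \<Rightarrow> real" where
  "dfun f x = vector_derivative f (at x within {0..1})"

(* Hoelder class Sigma(beta,L), beta in (0,2]:  ceil(beta)-1 = 0 or 1 *)
definition Hoelder :: "real \<Rightarrow> real \<Rightarrow> (real \<Rightarrow> real) \<Rightarrow> bool" where
  "Hoelder \<beta> L f =
    (if \<beta> \<le> 1 then (\<forall>x\<in>{0..1}. \<forall>y\<in>{0..1}. \<bar>f x - f y\<bar> \<le> L * \<bar>x - y\<bar> powr \<beta>)
     else (\<forall>x\<in>{0..1}. f differentiable (at x within {0..1})) \<and>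
          (\<forall>x\<in>{0..1}. \<forall>y\<in>{0..1}. \<bar>dfun f x - dfun f y\<bar> \<le> L * \<bar>x - y\<bar> powr (\<beta> - 1)))"

(* F_beta(delta); the max / min are attained by continuity, stated as existence *)
definition Fclass :: "real \<Rightarrow> real \<Rightarrow> real \<Rightarrow> (real \<Rightarrow> real) set" where
  "Fclass \<beta> L \<delta> = {f. Hoelder \<beta> L f \<and>
     (if \<beta> \<le> 1 then (\<exists>a b. 0 \<le> a \<and> a < b \<and> b \<le> 1 \<and> f a - f b \<ge> \<delta>)
      else (\<exists>x\<in>{0..1}. dfun f x \<le> - \<delta>))}"

definition eps0 :: "real \<Rightarrow> (real \<Rightarrow> real) \<Rightarrow> real" where
  "eps0 \<gamma> f = (INF g \<in> {g. mono_on {0..1} g}.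
      measure lborel {x \<in> {0..1}. \<bar>f x - g x\<bar> > \<gamma>})"

definition eps1 :: "real \<Rightarrow> (real \<Rightarrow> real) \<Rightarrow> real" where
  "eps1 \<gamma> f = measure lborel {x \<in> {0..1}. dfun f x \<le> - \<gamma>}"

definition epsb :: "real \<Rightarrow> real \<Rightarrow> (real \<Rightarrow> real) \<Rightarrow> real" where
  "epsb \<beta> \<gamma> f = (if \<beta> \<le> 1 then eps0 \<gamma> f else eps1 \<gamma> f)"

definition kernel :: "(real \<Rightarrow> real) \<Rightarrow> real \<Rightarrow> real \<Rightarrow> bool" where
  "kernel K Kmax LK =
    ((\<forall>x. 0 \<le> K x) \<and> (K has_integral 1) UNIV \<and> (\<forall>x. \<bar>x\<bar> > 1 \<longrightarrow> K x = 0) \<and>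
     (\<forall>x. K x \<le> Kmax) \<and> (\<forall>x y. \<bar>K x - K y\<bar> \<le> LK * \<bar>x - y\<bar>) \<and> (\<forall>x. K (- x) = K x))"

definition cb :: "real \<Rightarrow> nat" where "cb \<beta> = nat (ceiling \<beta>)"

definition lam0 :: "real \<Rightarrow> real" where
  "lam0 \<beta> = (if \<beta> \<le> 1 then 1/2 else 0.0228)"

definition mu2 :: "(real \<Rightarrow> real) \<Rightarrow> real" where
  "mu2 K = integral UNIV (\<lambda>x. (K x)\<^sup>2)"

definition Cstar :: "real \<Rightarrow> real \<Rightarrow> real" where
  "Cstar \<beta> Kmax = 8 * Kmax / lam0 \<beta>"

definition q1 :: "real \<Rightarrow> real \<Rightarrow> real \<Rightarrow> real" where
  "q1 \<beta> L Kmax = Cstar \<beta> Kmax * L / fact (cb \<beta> - 1)"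

definition q2 :: "real \<Rightarrow> real \<Rightarrow> (real \<Rightarrow> real) \<Rightarrow> real" where
  "q2 \<beta> \<sigma> K = 16 * \<sigma>\<^sup>2 * real (cb \<beta>) * mu2 K / (lam0 \<beta>)\<^sup>2"

definition Ch :: "real \<Rightarrow> real \<Rightarrow> real \<Rightarrow> (real \<Rightarrow> real) \<Rightarrow> real \<Rightarrow> real" where
  "Ch \<beta> L \<sigma> K Kmax =
     (q2 \<beta> \<sigma> K / (4 * (q1 \<beta> L Kmax)\<^sup>2 * \<beta>)) powr (1 / (2 * \<beta> + 1))"

definition hn :: "real \<Rightarrow> real \<Rightarrow> real \<Rightarrow> (real \<Rightarrow> real) \<Rightarrow> real \<Rightarrow> nat \<Rightarrow> real" where
  "hn \<beta> L \<sigma> K Kmax n = Ch \<beta> L \<sigma> K Kmax * (ln (real n) / real n) powr (1 / (2 * \<beta> + 1))"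

definition L1 :: "real \<Rightarrow> real \<Rightarrow> real" where
  "L1 Kmax LK = sqrt (exp 1) * (Kmax + LK)"

definition L2 :: "real \<Rightarrow> real \<Rightarrow> real \<Rightarrow> real" where
  "L2 \<beta> Kmax LK = 2 * real (cb \<beta>) * Kmax + real (cb \<beta>) * LK"

definition Ctil :: "real \<Rightarrow> real \<Rightarrow> real \<Rightarrow> real" where
  "Ctil \<beta> Kmax LK = L1 Kmax LK / (8 * L2 \<beta> Kmax LK) + sqrt (exp 1) * Kmax / lam0 \<beta>"

definition Wc :: "real \<Rightarrow> real \<Rightarrow> real \<Rightarrow> real" where
  "Wc \<beta> Kmax LK = max (4 * (Cstar \<beta> Kmax)\<^sup>2) (4 * (Ctil \<beta> Kmax LK)\<^sup>2)"

definition Cbeta :: "real \<Rightarrow> real \<Rightarrow> real \<Rightarrow> (real \<Rightarrow> real) \<Rightarrow> real \<Rightarrow> real \<Rightarrow> real" where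
  "Cbeta \<beta> L \<sigma> K Kmax LK =
    (let W = Wc \<beta> Kmax LK; c = Ch \<beta> L \<sigma> K Kmax powr (2 * \<beta> + 1) in
     if \<beta> \<le> 1 then
       ((max (16 * Kmax / lam0 \<beta>) 2) + 4) * L + \<sigma> * (sqrt (4 * W / c) + sqrt (6 * W / c))
     else 4 * L + 16 * L2 \<beta> Kmax LK * \<sigma> / lam0 \<beta> * sqrt (4 * W / c))"

definition alph :: "real \<Rightarrow> real" where
  "alph \<beta> = \<beta> - real_of_int (ceiling \<beta>) + 1"

definition Deltan :: "real \<Rightarrow> nat \<Rightarrow> real" where
  "Deltan \<beta> n = (ln (real n) / real n) powr (alph \<beta> / (2 * \<beta> + 1))"

definition gamman :: "real \<Rightarrow> real \<Rightarrow> real \<Rightarrow> (real \<Rightarrow> real) \<Rightarrow> real \<Rightarrow> real \<Rightarrow> nat \<Rightarrow> real" where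
  "gamman \<beta> L \<sigma> K Kmax LK n = Cbeta \<beta> L \<sigma> K Kmax LK * hn \<beta> L \<sigma> K Kmax n powr alph \<beta>"

end

theory Submission
  imports Defs
begin

lemma holder_cont:
  fixes u :: "real \<Rightarrow> real"
  assumes H: "\<forall>x\<in>{0..1}. \<forall>y\<in>{0..1}. \<bar>u x - u y\<bar> \<le> L * \<bar>x - y\<bar> powr p" and p: "0 < p"
  shows "continuous_on {0..1} u"
  unfolding continuous_on_def
proof
  fix x :: real assume x: "x \<in> {0..1}"
  have "((\<lambda>y. u y - u x) \<longlongrightarrow> 0) (at x within {0..1})"
  proof (rule Lim_null_comparison[where g="\<lambda>y. L * \<bar>y - x\<bar> powr p"])
    show "\<forall>\<^sub>F y in at x within {0..1}. norm (u y - u x) \<le> L * \<bar>y - x\<bar> powr p"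
      unfolding eventually_at_filter using H x by (auto intro!: always_eventually)
    have "((\<lambda>y. \<bar>y - x\<bar>) \<longlongrightarrow> 0) (at x within {0..1})"
      by (intro tendsto_rabs_zero LIM_zero tendsto_ident_at)
    then have "((\<lambda>y. \<bar>y - x\<bar> powr p) \<longlongrightarrow> 0) (at x within {0..1})"
      by (rule tendsto_zero_powrI) (use p in auto)
    then show "((\<lambda>y. L * \<bar>y - x\<bar> powr p) \<longlongrightarrow> 0) (at x within {0..1})"
      by (rule tendsto_mult_right_zero)
  qed
  then show "(u \<longlongrightarrow> u x) (at x within {0..1})" by (simp add: LIM_zero_iff)
qed

lemma fmeas01:
  assumes "S \<in> sets borel" "S \<subseteq> {0..1::real}"
  shows "S \<in> fmeasurable lborel"
proof -
  have "emeasure lborel S \<le> emeasure lborel {0..1::real}"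
    using assms by (intro emeasure_mono) auto
  also have "emeasure lborel {0..1::real} < \<infinity>" by simp
  finally have "emeasure lborel S < \<infinity>" .
  then show ?thesis using assms by (auto simp: fmeasurable_def)
qed

lemma case1:
  fixes f g :: "real \<Rightarrow> real"
  assumes b0: "0 < \<beta>" "\<beta> \<le> 1" and L: "0 < L" and gam: "0 \<le> \<gamma>" and h: "0 < h"
    and H: "\<forall>x\<in>{0..1}. \<forall>y\<in>{0..1}. \<bar>f x - f y\<bar> \<le> L * \<bar>x - y\<bar> powr \<beta>"
    and g: "mono_on {0..1} g"
    and ab: "0 \<le> a" "a < b" "b \<le> 1" and fab: "f a - f b \<ge> 2 * \<gamma> + 2 * L * h powr \<beta>"
  shows "measure lborel {x\<in>{0..1}. \<bar>f x - g x\<bar> > \<gamma>} \<ge> h"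
proof -
  have "f a - f b \<le> L * \<bar>a - b\<bar> powr \<beta>" using H[rule_format, of a b] ab by auto
  also have "\<bar>a - b\<bar> = b - a" using ab by simp
  finally have "L * (b - a) powr \<beta> \<ge> 2 * L * h powr \<beta>" using fab gam by linarith
  hence 1: "(b - a) powr \<beta> \<ge> 2 * h powr \<beta>" using L by simp
  have "2 powr \<beta> \<le> 2 powr 1" using b0 by (intro powr_mono) auto
  hence "(2 * h) powr \<beta> \<le> 2 * h powr \<beta>" using h by (simp add: powr_mult mult_right_mono)
  hence "(2*h) powr \<beta> \<le> (b - a) powr \<beta>" using 1 by linarith
  hence bah: "2 * h \<le> b - a"
  proof (rule contrapos_pp)
    assume "\<not> 2 * h \<le> b - a"
    hence "(b - a) powr \<beta> < (2 * h) powr \<beta>" using ab b0 by (intro powr_less_mono2) auto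
    thus "\<not> (2*h) powr \<beta> \<le> (b - a) powr \<beta>" by linarith
  qed
  define d where "d = b - h - a"
  have dh: "d \<ge> h" using bah d_def by simp
  define E where "E = {x\<in>{0..1}. \<bar>f x - g x\<bar> > \<gamma>}"
  have fc: "continuous_on {0..1} f" by (rule holder_cont[OF H b0(1)])
  have fm: "f \<in> borel_measurable (restrict_space borel {0..1})"
    by (rule borel_measurable_continuous_on_restrict[OF fc])
  have gm: "g \<in> borel_measurable (restrict_space borel {0..1})"
    by (rule borel_measurable_mono_on_fnc[OF g])
  have "(\<lambda>x. \<bar>f x - g x\<bar>) \<in> borel_measurable (restrict_space borel {0..1::real})"
    using fm gm by (intro borel_measurable_abs borel_measurable_diff)
  hence "{x \<in> space (restrict_space borel {0..1::real}). \<bar>f x - g x\<bar> > \<gamma>} \<in> sets (restrict_space borel {0..1::real})"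
    by (simp add: borel_measurable_iff_greater)
  hence Eb: "E \<in> sets borel" unfolding E_def
    by (subst (asm) sets_restrict_space_iff) (auto simp: space_restrict_space)
  have E01: "E \<subseteq> {0..1}" unfolding E_def by auto
  define E1 where "E1 = E \<inter> {a<..a+h}"
  define E2 where "E2 = E \<inter> {b-h<..b}"
  define E2' where "E2' = (+) d -` E2 \<inter> space lborel"
  have E1b: "E1 \<in> fmeasurable lborel" using Eb E01 unfolding E1_def by (intro fmeas01) auto
  have E2b: "E2 \<in> fmeasurable lborel" using Eb E01 unfolding E2_def by (intro fmeas01) auto
  have dm: "(+) d \<in> borel_measurable lborel" by measurable
  have E2'b: "E2' \<in> sets borel" unfolding E2'_def using measurable_sets[OF dm, of E2] E2b
    by (auto simp: fmeasurable_def)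
  have m2: "measure lborel E2 = measure lborel E2'"
  proof -
    have "measure lborel E2 = measure (distr lborel borel ((+) d)) E2"
      by (simp add: lborel_distr_plus)
    also have "\<dots> = measure lborel E2'" unfolding E2'_def
      using E2b by (intro measure_distr) (auto simp: fmeasurable_def)
    finally show ?thesis .
  qed
  have E2'01: "E2' \<subseteq> {0..1}" unfolding E2'_def E2_def d_def using ab dh d_def by auto
  have E2'f: "E2' \<in> fmeasurable lborel" by (rule fmeas01[OF E2'b E2'01])
  have cover: "{a<..<a+h} \<subseteq> E1 \<union> E2'"
  proof
    fix x assume x: "x \<in> {a<..<a+h}"
    define y where "y = d + x"
    have x01: "x \<in> {0..1}" and y01: "y \<in> {0..1}" using x ab dh d_def y_def bah by auto
    have "\<bar>f x - f a\<bar> \<le> L * \<bar>x - a\<bar> powr \<beta>" using x01 ab by (intro H[rule_format]) auto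
    also have "\<bar>x - a\<bar> powr \<beta> < h powr \<beta>" using x b0 by (intro powr_less_mono2) auto
    finally have fx: "f x > f a - L * h powr \<beta>" using L by (simp add: abs_le_iff) 
    have "\<bar>f y - f b\<bar> \<le> L * \<bar>y - b\<bar> powr \<beta>" using y01 ab by (intro H[rule_format]) auto
    also have "\<bar>y - b\<bar> powr \<beta> < h powr \<beta>" using x b0 y_def d_def by (intro powr_less_mono2) auto
    finally have fy: "f y < f b + L * h powr \<beta>" using L by (simp add: abs_le_iff)
    have "g x \<le> g y" using g x01 y01 x dh y_def by (intro mono_onD[OF g]) auto
    hence "(f x - g x) + (g y - f y) > 2 * \<gamma>" using fx fy fab by linarith
    hence "f x - g x > \<gamma> \<or> g y - f y > \<gamma>" by linarith
    hence "x \<in> E \<or> y \<in> E" unfolding E_def using x01 y01 by auto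
    moreover have "y \<in> {b-h<..b}" using x y_def d_def by auto
    ultimately show "x \<in> E1 \<union> E2'" unfolding E1_def E2'_def E2_def y_def using x by auto
  qed
  have "h = measure lborel {a<..<a+h}" using h by simp
  also have "\<dots> \<le> measure lborel (E1 \<union> E2')"
    using cover E1b E2'f by (intro measure_mono_fmeasurable) auto
  also have "\<dots> \<le> measure lborel E1 + measure lborel E2'"
    using E1b E2'f by (intro measure_Un_le) auto
  also have "\<dots> = measure lborel (E1 \<union> E2)"
    using E1b E2b m2 bah unfolding E1_def E2_def
    by (subst measure_Union) (auto simp: fmeasurable_def)
  also have "\<dots> \<le> measure lborel E"
    using E1b E2b Eb E01 unfolding E1_def E2_def by (intro measure_mono_fmeasurable fmeas01) auto
  finally show ?thesis unfolding E_def .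
qed

lemma case2:
  fixes f :: "real \<Rightarrow> real"
  assumes b: "1 < \<beta>" and L: "0 < L" and gam: "0 \<le> \<gamma>" and h: "0 \<le> h" "h \<le> 1"
    and D: "\<forall>x\<in>{0..1}. \<forall>y\<in>{0..1}. \<bar>dfun f x - dfun f y\<bar> \<le> L * \<bar>x - y\<bar> powr (\<beta> - 1)"
    and x0: "x0 \<in> {0..1}" and dx0: "dfun f x0 \<le> - (2 * \<gamma> + 2 * L * h powr (\<beta> - 1))"
  shows "measure lborel {x\<in>{0..1}. dfun f x \<le> - \<gamma>} \<ge> h"
proof -
  define S where "S = {x\<in>{0..1}. dfun f x \<le> - \<gamma>}"
  have c: "continuous_on {0..1} (dfun f)" by (rule holder_cont[OF D]) (use b in simp)
  have "closed ({0..1} \<inter> dfun f -` {..-\<gamma>})"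
    by (rule continuous_closed_preimage[OF c]) auto
  moreover have "S = {0..1} \<inter> dfun f -` {..-\<gamma>}" unfolding S_def by auto
  ultimately have "closed S" by simp
  hence Sf: "S \<in> fmeasurable lborel" by (intro fmeas01) (auto simp: S_def)
  define I where "I = {max 0 (x0-h) .. min 1 (x0+h)}"
  have IS: "I \<subseteq> S"
  proof
    fix x assume x: "x \<in> I"
    hence x01: "x \<in> {0..1}" and xh: "\<bar>x - x0\<bar> \<le> h" unfolding I_def by auto
    have "\<bar>dfun f x - dfun f x0\<bar> \<le> L * \<bar>x - x0\<bar> powr (\<beta> - 1)"
      using x01 x0 by (intro D[rule_format])
    also have "\<dots> \<le> L * h powr (\<beta> - 1)"
      using xh b L by (intro mult_left_mono powr_mono2) auto
    finally have "dfun f x \<le> - \<gamma>" using dx0 gam by (simp add: abs_le_iff)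
    thus "x \<in> S" using x01 unfolding S_def by auto
  qed
  have "h \<le> min 1 (x0+h) - max 0 (x0-h)" using h x0 by auto
  also have "\<dots> = measure lborel I" unfolding I_def using h x0 by simp
  also have "\<dots> \<le> measure lborel S" using IS Sf by (intro measure_mono_fmeasurable) (auto simp: I_def)
  finally show ?thesis unfolding S_def .
qed

theorem mainTheorem13:
  fixes \<beta> L \<sigma> Kmax LK C :: real and K :: "real \<Rightarrow> real" and n :: nat
  assumes "0 < \<beta>" "\<beta> \<le> 2" "0 < L" "0 < \<sigma>" "kernel K Kmax LK" "2 \<le> n"
    and "1 < \<beta> \<Longrightarrow> hn \<beta> L \<sigma> K Kmax n \<le> 1"
    and "C \<ge> (2 * gamman \<beta> L \<sigma> K Kmax LK n + 2 * L * hn \<beta> L \<sigma> K Kmax n powr alph \<beta>)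
               / Deltan \<beta> n"
    and "f \<in> Fclass \<beta> L (C * Deltan \<beta> n)"
  shows "epsb \<beta> (gamman \<beta> L \<sigma> K Kmax LK n) f \<ge> hn \<beta> L \<sigma> K Kmax n"
proof -
  define h where "h = hn \<beta> L \<sigma> K Kmax n"
  define \<gamma> where "\<gamma> = gamman \<beta> L \<sigma> K Kmax LK n"
  define \<Delta> where "\<Delta> = Deltan \<beta> n"
  have "real n \<ge> 2" using assms(6) by simp
  hence l0: "ln (real n) > 0" by simp
  hence "ln (real n) / real n > 0" using \<open>real n \<ge> 2\<close> by simp
  hence Dpos: "\<Delta> > 0" unfolding \<Delta>_def Deltan_def using l0 \<open>real n \<ge> 2\<close> by simp
  have h0: "h \<ge> 0" unfolding h_def hn_def Ch_def by simp
  have k1: "0 \<le> K 0" "K 0 \<le> Kmax" "\<bar>K 0 - K 1\<bar> \<le> LK * \<bar>0 - 1\<bar>"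
    using assms(5) unfolding kernel_def by blast+
  have K: "0 \<le> Kmax" "0 \<le> LK" using k1 by (linarith, simp)
  define W where "W = Wc \<beta> Kmax LK"
  define c where "c = Ch \<beta> L \<sigma> K Kmax powr (2 * \<beta> + 1)"
  have W0: "W \<ge> 0" unfolding W_def Wc_def by (simp add: le_max_iff_disj)
  have c0: "c \<ge> 0" unfolding c_def by simp
  have s1: "sqrt (4 * W / c) \<ge> 0" "sqrt (6 * W / c) \<ge> 0" using W0 c0 by simp_all
  have L20: "L2 \<beta> Kmax LK \<ge> 0" unfolding L2_def using K by simp
  have lp: "lam0 \<beta> > 0" unfolding lam0_def by simp
  have m0: "max (16 * Kmax / lam0 \<beta>) 2 + 4 \<ge> 0" by simp
  have Cb: "Cbeta \<beta> L \<sigma> K Kmax LK \<ge> 0"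
    unfolding Cbeta_def Let_def W_def[symmetric] c_def[symmetric]
    using s1 L20 lp m0 assms(3,4) by (auto intro!: add_nonneg_nonneg mult_nonneg_nonneg divide_nonneg_pos)
  have gam: "\<gamma> \<ge> 0" unfolding \<gamma>_def gamman_def using Cb by simp
  have CD: "C * \<Delta> \<ge> 2 * \<gamma> + 2 * L * h powr alph \<beta>"
    using assms(8) Dpos unfolding \<gamma>_def h_def \<Delta>_def by (simp add: pos_divide_le_eq)
  show ?thesis
  proof (cases "\<beta> \<le> 1")
    case True
    have "ceiling \<beta> = 1" using True assms(1) by (simp add: ceiling_eq_iff)
    hence al: "alph \<beta> = \<beta>" unfolding alph_def by simp
    have F1: "Hoelder \<beta> L f" and F2: "\<exists>a b. 0 \<le> a \<and> a < b \<and> b \<le> 1 \<and> f a - f b \<ge> C * \<Delta>"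
      using assms(9) True unfolding Fclass_def \<Delta>_def by simp_all
    have H: "\<forall>x\<in>{0..1}. \<forall>y\<in>{0..1}. \<bar>f x - f y\<bar> \<le> L * \<bar>x - y\<bar> powr \<beta>"
      using F1 True unfolding Hoelder_def by simp
    from F2 obtain a b where ab: "0 \<le> a" "a < b" "b \<le> 1" "f a - f b \<ge> C * \<Delta>" by blast
    have "eps0 \<gamma> f \<ge> h" unfolding eps0_def
    proof (rule cINF_greatest)
      show "{g. mono_on {0..1::real} (g::real\<Rightarrow>real)} \<noteq> {}" 
      proof -
        have "mono_on {0..1::real} (\<lambda>x::real. 0::real)" by (rule mono_onI) simp
        thus ?thesis by (metis empty_Collect_eq)
      qed
    next
      fix g :: "real \<Rightarrow> real" assume g: "g \<in> {g. mono_on {0..1::real} g}"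
      show "h \<le> measure lborel {x \<in> {0..1}. \<gamma> < \<bar>f x - g x\<bar>}"
      proof (cases "h = 0")
        case True thus ?thesis by simp
      next
        case False
        show ?thesis
        proof (rule case1[OF assms(1) True assms(3) gam _ H _ ab(1-3)])
          show "0 < h" using False h0 by simp
          show "mono_on {0..1} g" using g by simp
          show "2 * \<gamma> + 2 * L * h powr \<beta> \<le> f a - f b" using CD ab(4) al by simp
        qed
      qed
    qed
    thus ?thesis using True unfolding epsb_def h_def \<gamma>_def by simp
  next
    case False
    have "ceiling \<beta> = 2" using False assms(2) by (simp add: ceiling_eq_iff)
    hence al: "alph \<beta> = \<beta> - 1" unfolding alph_def by simp
    have F1: "Hoelder \<beta> L f" and F2: "\<exists>x\<in>{0..1}. dfun f x \<le> - (C * \<Delta>)"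
      using assms(9) False unfolding Fclass_def \<Delta>_def by simp_all
    have D: "\<forall>x\<in>{0..1}. \<forall>y\<in>{0..1}. \<bar>dfun f x - dfun f y\<bar> \<le> L * \<bar>x - y\<bar> powr (\<beta> - 1)"
      using F1 False unfolding Hoelder_def by simp
    from F2 obtain x0 where x0: "x0 \<in> {0..1}" "dfun f x0 \<le> - (C * \<Delta>)" by blast
    have "eps1 \<gamma> f \<ge> h" unfolding eps1_def
    proof (rule case2[OF _ assms(3) gam h0 _ D x0(1)])
      show "1 < \<beta>" using False by simp
      show "h \<le> 1" using False assms(7) unfolding h_def by simp
      show "dfun f x0 \<le> - (2 * \<gamma> + 2 * L * h powr (\<beta> - 1))" using x0(2) CD al by simp
    qed
    thus ?thesis using False unfolding epsb_def h_def \<gamma>_def by simp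
  qed
qed

end
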